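(* Let $\mathbf X=(X,\mu,T)$ be a nontrivial rigid-recurrence system. Then for every measurable $D\subseteq X$ with $D\cap TD=\varnothing$ and every $c>0$, the set $R_c(D)=\{n\in\mathbb Z:\mu(D\cap T^nD)>c\}$ does not contain any set of the form $n_0+B-B$ with $n_0\in\mathbb Z$, $B\subseteq\mathbb Z$ and $d^*(B)>0$.
   Context: A measure preserving system is a probability space $(X,\mu)$ with an invertible measure preserving map $T$. $S\subseteq\mathbb Z$ is a set of recurrence if for every measure preserving system $(Y,\nu,R)$ and every measurable $E$ with $\nu(E)>0$ there is $n\in S$ with $\nu(E\cap R^nE)>0$. $S$ is a set of rigidity for $\mathbf X$ if $S$ is infinite and for all measurable $D\subseteq X$ and $\varepsilon>0$, $\{n\in S:\mu(D\triangle T^nD)>\varepsilon\}$ is finite. $\mathbf X$ is a rigid-recurrence system if there is a set of rigidity $S$ for $\mathbf X$ such that $S+n$ is a set of recurrence for every $n\in\mathbb Z$. $B-B=\{a-b:a,b\in B\}$, and $d^*(B)=\lim_{N\to\infty}\sup_{M\in\mathbb Z}\frac{|B\cap[M,M+N-1]|}{N}$ is the upper Banach density. *)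

theory Defs
  imports "HOL-Probability.Probability"
begin

definition mps :: "'a measure \<Rightarrow> ('a \<Rightarrow> 'a) \<Rightarrow> bool" where
  "mps M T \<longleftrightarrow> prob_space M \<and> bij_betw T (space M) (space M)
     \<and> T \<in> M \<rightarrow>\<^sub>M M \<and> the_inv_into (space M) T \<in> M \<rightarrow>\<^sub>M M
     \<and> (\<forall>A\<in>sets M. measure M (T -` A \<inter> space M) = measure M A)"

definition tpow :: "'a measure \<Rightarrow> ('a \<Rightarrow> 'a) \<Rightarrow> int \<Rightarrow> 'a \<Rightarrow> 'a" where
  "tpow M T n = (if n \<ge> 0 then T ^^ nat n else (the_inv_into (space M) T) ^^ nat (- n))"

definition set_of_recurrence :: "int set \<Rightarrow> bool" where
  "set_of_recurrence S \<longleftrightarrow>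
     (\<forall>(N::real measure) R. mps N R \<longrightarrow>
        (\<forall>E\<in>sets N. measure N E > 0 \<longrightarrow>
           (\<exists>n\<in>S. measure N (E \<inter> tpow N R n ` E) > 0)))"

definition set_of_rigidity :: "'a measure \<Rightarrow> ('a \<Rightarrow> 'a) \<Rightarrow> int set \<Rightarrow> bool" where
  "set_of_rigidity M T S \<longleftrightarrow> infinite S \<and>
     (\<forall>D\<in>sets M. \<forall>\<epsilon>>0. finite {n\<in>S. measure M (sym_diff D (tpow M T n ` D)) > \<epsilon>})"

definition rigid_recurrence :: "'a measure \<Rightarrow> ('a \<Rightarrow> 'a) \<Rightarrow> bool" where
  "rigid_recurrence M T \<longleftrightarrow> mps M T \<and>
     (\<exists>S. set_of_rigidity M T S \<and> (\<forall>n::int. set_of_recurrence ((\<lambda>s. s + n) ` S)))"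

definition nontrivial_system :: "'a measure \<Rightarrow> bool" where
  "nontrivial_system M \<longleftrightarrow> (\<exists>A\<in>sets M. 0 < measure M A \<and> measure M A < 1)"

definition upper_banach_density :: "int set \<Rightarrow> real" where
  "upper_banach_density B =
     lim (\<lambda>N::nat. SUP M::int. real (card (B \<inter> {M..M + int N - 1})) / real N)"

definition return_set :: "'a measure \<Rightarrow> ('a \<Rightarrow> 'a) \<Rightarrow> 'a set \<Rightarrow> real \<Rightarrow> int set" where
  "return_set M T D c = {n. measure M (D \<inter> tpow M T n ` D) > c}"

end

theory Submission
  imports Defs "HOL-Library.Nat_Bijection" "HOL-Library.Diagonal_Subsequence"
begin


lemma diag_conv:
  fixes a :: "'q \<Rightarrow> nat \<Rightarrow> real"
  assumes Q: "countable Q" and bnd: "\<And>q i. q \<in> Q \<Longrightarrow> \<bar>a q i\<bar> \<le> 1"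
  shows "\<exists>\<sigma>. strict_mono \<sigma> \<and> (\<forall>q\<in>Q. convergent (\<lambda>k. a q (\<sigma> k)))"
proof (cases "Q = {}")
  case True then show ?thesis by (auto intro: strict_mono_id)
next
  case False
  define qq where "qq = from_nat_into Q"
  have qq: "range qq = Q" unfolding qq_def using range_from_nat_into[OF False Q] .
  define P where "P = (\<lambda>n (s::nat\<Rightarrow>nat). convergent (\<lambda>k. a (qq n) (s k)))"
  interpret S: subseqs P
  proof
    fix n and s :: "nat \<Rightarrow> nat" assume "strict_mono s"
    have "qq n \<in> Q" using qq by auto
    then have "bounded (range (\<lambda>k. a (qq n) (s k)))"
      using bnd unfolding bounded_iff by (auto simp: real_norm_def)
    then obtain l r where "strict_mono r" "((\<lambda>k. a (qq n) (s k)) \<circ> r) \<longlonglongrightarrow> l"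
      using bounded_imp_convergent_subsequence by blast
    then show "\<exists>r'. strict_mono r' \<and> P n (s \<circ> r')"
      unfolding P_def convergent_def by (auto simp: o_def)
  qed
  have hold: "P n (S.diagseq \<circ> ((+) (Suc n)))" for n
    by (rule S.diagseq_holds) (auto simp: P_def convergent_def o_def intro: LIMSEQ_subseq_LIMSEQ[unfolded o_def])
  have "convergent (\<lambda>k. a q (S.diagseq k))" if "q \<in> Q" for q
  proof -
    obtain n where n: "q = qq n" using \<open>q\<in>Q\<close> qq by auto
    have "convergent (\<lambda>k. a q (S.diagseq (k + Suc n)))"
      using hold[of n] by (simp add: P_def n o_def add.commute)
    then show ?thesis using convergent_ignore_initial_segment by blast
  qed
  then show ?thesis using S.subseq_diagseq by blast
qed

locale furst =
  fixes C :: "int set" and \<delta> :: real and Ms :: "nat \<Rightarrow> int" and Ns :: "nat \<Rightarrow> nat"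
  assumes Ns_ge: "\<And>i. Ns i \<ge> Suc i"
    and dens: "\<And>i. real (card (C \<inter> {Ms i..Ms i + int (Ns i) - 1})) \<ge> \<delta> * real (Ns i)"
    and \<delta>_pos: "\<delta> > 0"
begin

definition Iv :: "nat \<Rightarrow> int set" where "Iv i = {Ms i..Ms i + int (Ns i) - 1}"

lemma Iv_fin[simp]: "finite (Iv i)" and card_Iv: "card (Iv i) = Ns i" and Iv_ne[simp]: "Iv i \<noteq> {}"
  using Ns_ge[of i] by (auto simp: Iv_def)

definition pat :: "int set \<Rightarrow> int \<Rightarrow> int \<Rightarrow> real" where
  "pat J m = restrict (\<lambda>j. indicator C (m + j)) J"

definition pp :: "nat \<Rightarrow> int set \<Rightarrow> (int \<Rightarrow> real) pmf" where
  "pp i J = map_pmf (pat J) (pmf_of_set (Iv i))"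

definition Pat :: "int set \<Rightarrow> (int \<Rightarrow> real) set" where
  "Pat J = PiE J (\<lambda>_. {0,1})"

lemma set_pp: "set_pmf (pp i J) \<subseteq> Pat J"
  by (auto simp: pp_def Pat_def pat_def indicator_def)

lemma pp_prob: "measure (pp i J) X = real (card {m \<in> Iv i. pat J m \<in> X}) / real (Ns i)"
  unfolding pp_def measure_map_pmf
  by (subst measure_pmf_of_set) (auto simp: card_Iv Int_def)

lemma Pat_fin: "finite J \<Longrightarrow> finite (Pat J)"
  unfolding Pat_def by (auto intro: finite_PiE)

definition QQ :: "(int set \<times> (int \<Rightarrow> real)) set" where "QQ = Sigma (Collect finite) Pat"

lemma QQ_count: "countable QQ"
  unfolding QQ_def by (intro countable_SIGMA countable_Collect_finite countable_finite Pat_fin) auto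

definition \<sigma> :: "nat \<Rightarrow> nat" where
  "\<sigma> = (SOME s. strict_mono s \<and> (\<forall>q\<in>QQ. convergent (\<lambda>k. pmf (pp (s k) (fst q)) (snd q))))"

lemma \<sigma>_props: "strict_mono \<sigma> \<and> (\<forall>q\<in>QQ. convergent (\<lambda>k. pmf (pp (\<sigma> k) (fst q)) (snd q)))"
proof -
  have "\<exists>s. strict_mono s \<and> (\<forall>q\<in>QQ. convergent (\<lambda>k. pmf (pp (s k) (fst q)) (snd q)))"
    by (rule diag_conv[OF QQ_count]) (auto simp: pmf_le_1)
  then show ?thesis unfolding \<sigma>_def by (rule someI_ex)
qed

definition w :: "int set \<Rightarrow> (int \<Rightarrow> real) \<Rightarrow> real" where
  "w J f = lim (\<lambda>k. pmf (pp (\<sigma> k) J) f)"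

lemma w_lim: assumes "finite J" shows "(\<lambda>k. pmf (pp (\<sigma> k) J) f) \<longlonglongrightarrow> w J f"
proof (cases "f \<in> Pat J")
  case True
  then have "(J, f) \<in> QQ" using assms by (auto simp: QQ_def)
  then show ?thesis using \<sigma>_props unfolding w_def by (auto simp: convergent_LIMSEQ_iff)
next
  case False
  then have "\<And>k. pmf (pp (\<sigma> k) J) f = 0" using set_pp by (meson pmf_eq_0_set_pmf subsetD)
  then show ?thesis unfolding w_def by (simp add: limI)
qed

lemma w_zero: "finite J \<Longrightarrow> f \<notin> Pat J \<Longrightarrow> w J f = 0"
proof -
  assume "finite J" "f \<notin> Pat J"
  then have "\<And>k. pmf (pp (\<sigma> k) J) f = 0" using set_pp by (meson pmf_eq_0_set_pmf subsetD)
  then show ?thesis unfolding w_def by (simp add: limI)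
qed

lemma w_nonneg: "finite J \<Longrightarrow> w J f \<ge> 0"
  using w_lim by (rule LIMSEQ_le_const) auto

lemma pp_measure_sum: "finite J \<Longrightarrow> measure (pp i J) X = (\<Sum>f\<in>Pat J \<inter> X. pmf (pp i J) f)"
proof -
  assume J: "finite J"
  have "measure (pp i J) X = measure (pp i J) (X \<inter> set_pmf (pp i J))" by (simp add: measure_Int_set_pmf)
  also have "X \<inter> set_pmf (pp i J) = (Pat J \<inter> X) \<inter> set_pmf (pp i J)" using set_pp by auto
  also have "measure (pp i J) \<dots> = measure (pp i J) (Pat J \<inter> X)" by (simp add: measure_Int_set_pmf)
  also have "\<dots> = (\<Sum>f\<in>Pat J \<inter> X. pmf (pp i J) f)" using Pat_fin[OF J]
    by (intro measure_measure_pmf_finite) auto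
  finally show ?thesis .
qed

lemma measure_lim_w: "finite J \<Longrightarrow> (\<lambda>k. measure (pp (\<sigma> k) J) X) \<longlonglongrightarrow> (\<Sum>f\<in>Pat J \<inter> X. w J f)"
  by (simp add: pp_measure_sum) (intro tendsto_sum w_lim)

lemma w_sum: "finite J \<Longrightarrow> (\<Sum>f\<in>Pat J. w J f) = 1"
  using measure_lim_w[of J UNIV] by (simp add: LIMSEQ_const_iff)

definition pw :: "int set \<Rightarrow> (int \<Rightarrow> real) pmf" where "pw J = embed_pmf (w J)"

lemma pmf_pw: assumes J: "finite J" shows "pmf (pw J) f = w J f"
  unfolding pw_def
proof (rule pmf_embed_pmf)
  show "0 \<le> w J x" for x using w_nonneg[OF J] .
  have "(\<integral>\<^sup>+ x. ennreal (w J x) \<partial>count_space UNIV) = (\<Sum>x\<in>Pat J. ennreal (w J x))"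
    by (rule nn_integral_count_space') (auto simp: Pat_fin J w_zero)
  also have "\<dots> = ennreal (\<Sum>x\<in>Pat J. w J x)" using w_nonneg[OF J] by (simp add: sum_ennreal)
  finally show "(\<integral>\<^sup>+ x. ennreal (w J x) \<partial>count_space UNIV) = 1" by (simp add: w_sum J)
qed

lemma measure_pw_lim: assumes J: "finite J" shows "(\<lambda>k. measure (pp (\<sigma> k) J) X) \<longlonglongrightarrow> measure (pw J) X"
proof -
  have "set_pmf (pw J) \<subseteq> Pat J" using J w_zero[OF J] by (auto simp: set_pmf_eq pmf_pw)
  then have "measure (pw J) X = (\<Sum>f\<in>Pat J \<inter> X. pmf (pw J) f)"
  proof -
    assume s: "set_pmf (pw J) \<subseteq> Pat J"
    have "measure (pw J) X = measure (pw J) (X \<inter> set_pmf (pw J))" by (simp add: measure_Int_set_pmf)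
    also have "X \<inter> set_pmf (pw J) = (Pat J \<inter> X) \<inter> set_pmf (pw J)" using s by auto
    also have "measure (pw J) \<dots> = measure (pw J) (Pat J \<inter> X)" by (simp add: measure_Int_set_pmf)
    also have "\<dots> = (\<Sum>f\<in>Pat J \<inter> X. pmf (pw J) f)" using Pat_fin[OF J]
      by (intro measure_measure_pmf_finite) auto
    finally show ?thesis .
  qed
  then show ?thesis using measure_lim_w[OF J, of X] by (simp add: pmf_pw J)
qed

lemma pp_restrict: "J \<subseteq> H \<Longrightarrow> pp i J = map_pmf (\<lambda>f. restrict f J) (pp i H)"
  unfolding pp_def map_pmf_comp by (rule map_pmf_cong) (auto simp: pat_def restrict_def fun_eq_iff)

lemma pw_restrict: assumes "J \<subseteq> H" "finite H" shows "pw J = map_pmf (\<lambda>f. restrict f J) (pw H)"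
proof (rule pmf_eqI)
  fix f
  have J: "finite J" using assms finite_subset by blast
  have "(\<lambda>k. pmf (pp (\<sigma> k) J) f) \<longlonglongrightarrow> pmf (pw J) f" using w_lim[OF J] by (simp add: pmf_pw J)
  moreover have "(\<lambda>k. pmf (pp (\<sigma> k) J) f) \<longlonglongrightarrow> pmf (map_pmf (\<lambda>f. restrict f J) (pw H)) f"
    unfolding pp_restrict[OF assms(1)] pmf_map by (rule measure_pw_lim[OF assms(2)])
  ultimately show "pmf (pw J) f = pmf (map_pmf (\<lambda>f. restrict f J) (pw H)) f" by (rule LIMSEQ_unique)
qed

definition P :: "int set \<Rightarrow> (int \<Rightarrow> real) measure" where
  "P J = distr (measure_pmf (pw J)) (PiM J (\<lambda>_. borel)) (\<lambda>f. restrict f J)"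

lemma restrict_meas: "(\<lambda>f. restrict f J) \<in> measure_pmf p \<rightarrow>\<^sub>M PiM J (\<lambda>_. borel::real measure)"
  by (auto simp: measurable_pmf_measure1 space_PiM)

lemma restrict_meas': "(\<lambda>f. restrict f J) \<in> count_space UNIV \<rightarrow>\<^sub>M PiM J (\<lambda>_. borel::real measure)"
  by (auto simp: measurable_count_space_eq1 space_PiM)

lemma P_proj: assumes "J \<subseteq> H" "finite H"
  shows "P J = distr (P H) (PiM J (\<lambda>_. borel)) (\<lambda>f. restrict f J)"
proof -
  have "distr (P H) (PiM J (\<lambda>_. borel)) (\<lambda>f. restrict f J)
      = distr (measure_pmf (pw H)) (PiM J (\<lambda>_. borel)) ((\<lambda>f. restrict f J) \<circ> (\<lambda>f. restrict f H))"
    unfolding P_def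
    by (rule distr_distr[OF measurable_restrict_subset[OF assms(1)] restrict_meas])
  also have "(\<lambda>f. restrict f J) \<circ> (\<lambda>f. restrict f H) = (\<lambda>f. restrict f J) \<circ> (\<lambda>f. restrict f J)"
    using assms(1) by (auto simp: fun_eq_iff restrict_def)
  also have "distr (measure_pmf (pw H)) (PiM J (\<lambda>_. borel)) \<dots>
      = distr (distr (measure_pmf (pw H)) (count_space UNIV) (\<lambda>f. restrict f J)) (PiM J (\<lambda>_. borel)) (\<lambda>f. restrict f J)"
    by (rule distr_distr[symmetric, OF restrict_meas']) (simp add: measurable_pmf_measure1)
  also have "\<dots> = P J" unfolding P_def pw_restrict[OF assms] map_pmf_rep_eq ..
  finally show ?thesis ..
qed

lemma P_prob: "prob_space (P J)"
  unfolding P_def by (intro prob_space.prob_space_distr prob_space_measure_pmf restrict_meas)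

sublocale L: polish_projective "UNIV :: int set" P
  unfolding polish_projective_def projective_family_def using P_proj P_prob by blast

definition rect :: "int set \<Rightarrow> (int \<Rightarrow> real set) \<Rightarrow> (int \<Rightarrow> real) set" where
  "rect J A = {\<omega>. \<forall>j\<in>J. \<omega> j \<in> A j}"

lemma rect_emb: "rect J A = prod_emb UNIV (\<lambda>_. borel) J (PiE J A)"
  by (auto simp: rect_def prod_emb_def PiE_def Pi_def)

lemma rect_sets: "finite J \<Longrightarrow> (\<And>j. j \<in> J \<Longrightarrow> A j \<in> sets borel) \<Longrightarrow> rect J A \<in> sets L.lim"
  unfolding rect_emb by (auto intro!: measurable_prod_emb sets_PiM_I_finite)

lemma rect_lim:
  assumes J: "finite J" and A: "\<And>j. j \<in> J \<Longrightarrow> A j \<in> sets borel"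
  shows "(\<lambda>k. real (card {m \<in> Iv (\<sigma> k). \<forall>j\<in>J. indicator C (m + j) \<in> A j}) / real (Ns (\<sigma> k)))
           \<longlonglongrightarrow> measure L.lim (rect J A)"
proof -
  have "measure L.lim (rect J A) = measure (P J) (PiE J A)"
    unfolding rect_emb by (rule L.measure_lim_emb) (auto intro!: sets_PiM_I_finite J A)
  also have "\<dots> = measure (pw J) (Pi J A)"
    unfolding P_def
  proof (subst measure_distr[OF restrict_meas])
    show "PiE J A \<in> sets (PiM J (\<lambda>_. borel))" by (intro sets_PiM_I_finite J A)
    show "measure (pw J) ((\<lambda>f. restrict f J) -` PiE J A \<inter> space (measure_pmf (pw J))) = measure (pw J) (Pi J A)"
      by (rule arg_cong[where f="measure (pw J)"]) (auto simp: PiE_def Pi_def extensional_def)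
  qed
  finally have eq: "measure L.lim (rect J A) = measure (pw J) (Pi J A)" .
  have "(\<lambda>k. measure (pp (\<sigma> k) J) (Pi J A)) \<longlonglongrightarrow> measure (pw J) (Pi J A)" by (rule measure_pw_lim[OF J])
  moreover have "measure (pp i J) (Pi J A) = real (card {m \<in> Iv i. \<forall>j\<in>J. indicator C (m + j) \<in> A j}) / real (Ns i)" for i
  proof -
    have "{m \<in> Iv i. pat J m \<in> Pi J A} = {m \<in> Iv i. \<forall>j\<in>J. indicator C (m + j) \<in> A j}"
      by (auto simp: pat_def Pi_def)
    then show ?thesis unfolding pp_prob by simp
  qed
  ultimately show ?thesis unfolding eq by simp
qed

lemma Ns_\<sigma>: "real (Ns (\<sigma> k)) \<ge> real (Suc k)"
proof -
  have "k \<le> \<sigma> k" using \<sigma>_props seq_suble by blast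
  then show ?thesis using Ns_ge[of "\<sigma> k"] by simp
qed

lemma card_shift1:
  fixes \<Phi> :: "int \<Rightarrow> bool" and a :: int and N :: nat
  assumes "N \<ge> 1"
  shows "\<bar>real (card {m \<in> {a..a + int N - 1}. \<Phi> (m + 1)}) - real (card {m \<in> {a..a + int N - 1}. \<Phi> m})\<bar> \<le> 1"
proof -
  have im: "{m \<in> {a..a + int N - 1}. \<Phi> (m + 1)} = (\<lambda>m. m - 1) ` {m \<in> {a+1..a + int N}. \<Phi> m}"
  proof
    show "{m \<in> {a..a + int N - 1}. \<Phi> (m + 1)} \<subseteq> (\<lambda>m. m - 1) ` {m \<in> {a+1..a + int N}. \<Phi> m}"
    proof
      fix m assume "m \<in> {m \<in> {a..a + int N - 1}. \<Phi> (m + 1)}"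
      then show "m \<in> (\<lambda>m. m - 1) ` {m \<in> {a+1..a + int N}. \<Phi> m}"
        by (intro image_eqI[where x="m+1"]) auto
    qed
  qed auto
  have c1: "card {m \<in> {a..a + int N - 1}. \<Phi> (m + 1)} = card {m \<in> {a+1..a + int N}. \<Phi> m}"
    unfolding im by (rule card_image) (auto simp: inj_on_def)
  have s1: "{m \<in> {a+1..a + int N}. \<Phi> m} \<subseteq> {m \<in> {a..a + int N - 1}. \<Phi> m} \<union> {a + int N}" by auto
  have s2: "{m \<in> {a..a + int N - 1}. \<Phi> m} \<subseteq> {m \<in> {a+1..a + int N}. \<Phi> m} \<union> {a}" by auto
  have f1: "finite {m \<in> {a..a + int N - 1}. \<Phi> m}" by (rule finite_subset[OF _ finite_atLeastAtMost_int]) blast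
  have f2: "finite {m \<in> {a+1..a + int N}. \<Phi> m}" by (rule finite_subset[OF _ finite_atLeastAtMost_int]) blast
  have "card {m \<in> {a+1..a + int N}. \<Phi> m} \<le> card ({m \<in> {a..a + int N - 1}. \<Phi> m} \<union> {a + int N})"
    by (rule card_mono[OF _ s1]) (use f1 in blast)
  also have "\<dots> \<le> card {m \<in> {a..a + int N - 1}. \<Phi> m} + 1" using card_Un_le[of _ "{a + int N}"] by simp
  finally have i1: "card {m \<in> {a+1..a + int N}. \<Phi> m} \<le> card {m \<in> {a..a + int N - 1}. \<Phi> m} + 1" .
  have "card {m \<in> {a..a + int N - 1}. \<Phi> m} \<le> card ({m \<in> {a+1..a + int N}. \<Phi> m} \<union> {a})"
    by (rule card_mono[OF _ s2]) (use f2 in blast)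
  also have "\<dots> \<le> card {m \<in> {a+1..a + int N}. \<Phi> m} + 1" using card_Un_le[of _ "{a}"] by simp
  finally have i2: "card {m \<in> {a..a + int N - 1}. \<Phi> m} \<le> card {m \<in> {a+1..a + int N}. \<Phi> m} + 1" .
  show ?thesis unfolding c1 using i1 i2 by linarith
qed

definition sh :: "(int \<Rightarrow> real) \<Rightarrow> (int \<Rightarrow> real)" where "sh \<omega> = (\<lambda>j. \<omega> (j + 1))"

lemma sh_meas: "sh \<in> L.lim \<rightarrow>\<^sub>M L.lim"
proof -
  have "sh \<in> PiM UNIV (\<lambda>_. borel) \<rightarrow>\<^sub>M PiM UNIV (\<lambda>_. borel::real measure)"
    unfolding sh_def by (rule measurable_PiM_single') (auto simp: space_PiM)
  then show ?thesis by (simp add: measurable_def)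
qed


lemma shift_inv: "distr L.lim L.lim sh = L.lim"
proof (rule measure_eqI_PiM_infinite[where I=UNIV and M="\<lambda>_. borel"])
  show "sets (distr L.lim L.lim sh) = sets (PiM UNIV (\<lambda>_. borel))" by simp
  show "sets L.lim = sets (PiM UNIV (\<lambda>_. borel))" by simp
  show "finite_measure (distr L.lim L.lim sh)"
    using prob_space.prob_space_distr[OF L.P.prob_space_axioms sh_meas] unfolding prob_space_def by blast
  fix A J assume J: "finite J" "J \<subseteq> (UNIV::int set)" and A: "\<And>i. i \<in> J \<Longrightarrow> A i \<in> sets (borel::real measure)"
  define J' where "J' = (\<lambda>j. j + 1) ` J"
  define A' where "A' = (\<lambda>j. A (j - 1))"
  have J'fin: "finite J'" using J by (simp add: J'_def)
  have A': "\<And>i. i \<in> J' \<Longrightarrow> A' i \<in> sets borel" using A by (auto simp: J'_def A'_def)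
  have pre: "sh -` rect J A \<inter> space L.lim = rect J' A'"
  proof -
    have "space L.lim = UNIV" by (simp add: space_PiM)
    moreover have "sh -` rect J A = rect J' A'"
      unfolding sh_def rect_def J'_def A'_def by auto
    ultimately show ?thesis by simp
  qed
  have lim1: "(\<lambda>k. real (card {m \<in> Iv (\<sigma> k). \<forall>j\<in>J. indicator C (m + j) \<in> A j}) / real (Ns (\<sigma> k)))
           \<longlonglongrightarrow> measure L.lim (rect J A)" by (rule rect_lim[OF J(1) A])
  have lim2: "(\<lambda>k. real (card {m \<in> Iv (\<sigma> k). \<forall>j\<in>J. indicator C (m + 1 + j) \<in> A j}) / real (Ns (\<sigma> k)))
           \<longlonglongrightarrow> measure L.lim (rect J' A')"
  proof -
    have "\<And>m. (\<forall>j\<in>J'. indicator C (m + j) \<in> A' j) = (\<forall>j\<in>J. indicator C (m + 1 + j) \<in> A j)"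
      by (auto simp: J'_def A'_def ac_simps)
    then show ?thesis using rect_lim[OF J'fin, of A'] A' by simp
  qed
  have diff: "(\<lambda>k. real (card {m \<in> Iv (\<sigma> k). \<forall>j\<in>J. indicator C (m + 1 + j) \<in> A j}) / real (Ns (\<sigma> k))
      - real (card {m \<in> Iv (\<sigma> k). \<forall>j\<in>J. indicator C (m + j) \<in> A j}) / real (Ns (\<sigma> k))) \<longlonglongrightarrow> 0"
  proof (rule Lim_null_comparison)
    show "(\<lambda>k. inverse (real (Suc k))) \<longlonglongrightarrow> 0" by (rule LIMSEQ_inverse_real_of_nat)
    show "\<forall>\<^sub>F k in sequentially. norm (real (card {m \<in> Iv (\<sigma> k). \<forall>j\<in>J. indicator C (m + 1 + j) \<in> A j}) / real (Ns (\<sigma> k))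
      - real (card {m \<in> Iv (\<sigma> k). \<forall>j\<in>J. indicator C (m + j) \<in> A j}) / real (Ns (\<sigma> k))) \<le> inverse (real (Suc k))"
    proof (rule always_eventually, rule allI)
      fix k
      let ?N = "real (Ns (\<sigma> k))"
      have Npos: "?N > 0" using Ns_\<sigma>[of k] by simp
      have c: "\<bar>real (card {m \<in> Iv (\<sigma> k). \<forall>j\<in>J. indicator C (m + 1 + j) \<in> A j})
             - real (card {m \<in> Iv (\<sigma> k). \<forall>j\<in>J. indicator C (m + j) \<in> A j})\<bar> \<le> 1"
        unfolding Iv_def using card_shift1[of "Ns (\<sigma> k)" "Ms (\<sigma> k)" "\<lambda>m. \<forall>j\<in>J. indicator C (m + j) \<in> A j"] Ns_ge[of "\<sigma> k"]
        by (simp add: add.assoc add.commute[of 1] add.left_commute[of 1])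
      have "norm (real (card {m \<in> Iv (\<sigma> k). \<forall>j\<in>J. indicator C (m + 1 + j) \<in> A j}) / ?N
         - real (card {m \<in> Iv (\<sigma> k). \<forall>j\<in>J. indicator C (m + j) \<in> A j}) / ?N)
         = \<bar>real (card {m \<in> Iv (\<sigma> k). \<forall>j\<in>J. indicator C (m + 1 + j) \<in> A j})
             - real (card {m \<in> Iv (\<sigma> k). \<forall>j\<in>J. indicator C (m + j) \<in> A j})\<bar> / ?N"
        using Npos by (simp add: diff_divide_distrib[symmetric] abs_divide)
      also have "\<dots> \<le> 1 / ?N" using c Npos by (simp add: divide_right_mono)
      also have "\<dots> \<le> inverse (real (Suc k))" using Ns_\<sigma>[of k] by (simp add: divide_simps)
      finally show "norm (real (card {m \<in> Iv (\<sigma> k). \<forall>j\<in>J. indicator C (m + 1 + j) \<in> A j}) / ?N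
         - real (card {m \<in> Iv (\<sigma> k). \<forall>j\<in>J. indicator C (m + j) \<in> A j}) / ?N) \<le> inverse (real (Suc k))" .
    qed
  qed
  have "measure L.lim (rect J' A') - measure L.lim (rect J A) = 0"
    using LIMSEQ_unique[OF tendsto_diff[OF lim2 lim1] diff] .
  then have eqm: "measure L.lim (rect J' A') = measure L.lim (rect J A)" by simp
  have "emeasure (distr L.lim L.lim sh) (rect J A) = emeasure L.lim (rect J' A')"
  proof -
    have RA: "rect J A \<in> sets L.lim" using rect_sets[OF J(1), of A] A by blast
    show ?thesis unfolding emeasure_distr[OF sh_meas RA] pre ..
  qed
  also have "\<dots> = emeasure L.lim (rect J A)" by (simp add: L.P.emeasure_eq_measure eqm)
  finally show "emeasure (distr L.lim L.lim sh) (prod_emb UNIV (\<lambda>_. borel) J (PiE J A))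
      = emeasure L.lim (prod_emb UNIV (\<lambda>_. borel) J (PiE J A))" by (simp add: rect_emb)
qed

lemma E_pos: "measure L.lim (rect {0} (\<lambda>_. {1})) > 0"
proof -
  have "(\<lambda>k. real (card {m \<in> Iv (\<sigma> k). \<forall>j\<in>{0}. indicator C (m + j) \<in> (\<lambda>_. {1::real}) j}) / real (Ns (\<sigma> k)))
           \<longlonglongrightarrow> measure L.lim (rect {0} (\<lambda>_. {1}))" by (rule rect_lim) auto
  moreover have "real (card {m \<in> Iv (\<sigma> k). \<forall>j\<in>{0}. indicator C (m + j) \<in> (\<lambda>_. {1::real}) j}) / real (Ns (\<sigma> k)) \<ge> \<delta>" for k
  proof -
    have "{m \<in> Iv (\<sigma> k). \<forall>j\<in>{0}. indicator C (m + j) \<in> (\<lambda>_. {1::real}) j} = C \<inter> Iv (\<sigma> k)"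
      by (auto simp: indicator_def)
    moreover have "real (Ns (\<sigma> k)) > 0" using Ns_\<sigma>[of k] by simp
    ultimately show ?thesis using dens[of "\<sigma> k"] by (simp add: Iv_def field_simps)
  qed
  ultimately have "measure L.lim (rect {0} (\<lambda>_. {1})) \<ge> \<delta>" by (intro LIMSEQ_le_const) auto
  then show ?thesis using \<delta>_pos by simp
qed

lemma ret_diff: assumes "measure L.lim (rect {0, -n} (\<lambda>_. {1})) > 0" shows "\<exists>a\<in>C. \<exists>b\<in>C. n = a - b"
proof (rule ccontr)
  assume no: "\<not> ?thesis"
  have lim: "(\<lambda>k. real (card {m \<in> Iv (\<sigma> k). \<forall>j\<in>{0, -n}. indicator C (m + j) \<in> (\<lambda>_. {1::real}) j}) / real (Ns (\<sigma> k)))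
           \<longlonglongrightarrow> measure L.lim (rect {0, -n} (\<lambda>_. {1}))" by (rule rect_lim) auto
  have eq: "{m \<in> Iv (\<sigma> k). \<forall>j\<in>{0, -n}. indicator C (m + j) \<in> (\<lambda>_. {1::real}) j} = {}" for k
  proof -
    { fix m assume "m \<in> C" "m + - n \<in> C"
      have "n = m - (m + - n)" by simp
      then have False using no \<open>m \<in> C\<close> \<open>m + - n \<in> C\<close> by blast }
    then show ?thesis by (auto simp: indicator_def split: if_splits)
  qed
  have "(\<lambda>k::nat. 0::real) \<longlonglongrightarrow> measure L.lim (rect {0, -n} (\<lambda>_. {1}))"
    using lim unfolding eq by simp
  then have "measure L.lim (rect {0, -n} (\<lambda>_. {1})) = 0" by (simp add: LIMSEQ_const_iff)
  then show False using assms by simp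
qed


definition enc :: "nat set \<Rightarrow> real" where
  "enc = (SOME f. bij_betw f (UNIV::nat set set) (UNIV::real set))"

lemma bij_enc: "bij_betw enc UNIV UNIV"
  unfolding enc_def using nat_sets_eqpoll_reals unfolding eqpoll_def by (rule someI_ex)

definition dec :: "real \<Rightarrow> nat set" where "dec = inv enc"

lemma enc_dec[simp]: "enc (dec y) = y" and dec_enc[simp]: "dec (enc X) = X"
  using bij_enc unfolding dec_def bij_betw_def by (auto simp: surj_f_inv_f inv_f_f)

definition phi :: "(int \<Rightarrow> real) \<Rightarrow> nat set" where "phi \<omega> = {n. \<omega> (int_decode n) = 1}"
definition hh :: "(int \<Rightarrow> real) \<Rightarrow> real" where "hh \<omega> = enc (phi \<omega>)"
definition sgn1 :: "nat set \<Rightarrow> nat set" where "sgn1 X = {n. int_encode (int_decode n + 1) \<in> X}"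
definition sgn2 :: "nat set \<Rightarrow> nat set" where "sgn2 X = {n. int_encode (int_decode n - 1) \<in> X}"
definition RR :: "real \<Rightarrow> real" where "RR y = enc (sgn1 (dec y))"
definition RR' :: "real \<Rightarrow> real" where "RR' y = enc (sgn2 (dec y))"
definition sh' :: "(int \<Rightarrow> real) \<Rightarrow> (int \<Rightarrow> real)" where "sh' \<omega> = (\<lambda>j. \<omega> (j - 1))"
definition shp :: "int \<Rightarrow> (int \<Rightarrow> real) \<Rightarrow> (int \<Rightarrow> real)" where "shp z \<omega> = (\<lambda>j. \<omega> (j + z))"

lemma RR_hh: "RR (hh \<omega>) = hh (sh \<omega>)"
  by (simp add: RR_def hh_def sgn1_def phi_def sh_def)

lemma RR'_hh: "RR' (hh \<omega>) = hh (sh' \<omega>)"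
  by (simp add: RR'_def hh_def sgn2_def phi_def sh'_def)

lemma RR'_RR[simp]: "RR' (RR y) = y" and RR_RR'[simp]: "RR (RR' y) = y"
proof -
  have "sgn2 (sgn1 X) = X" "sgn1 (sgn2 X) = X" for X by (auto simp: sgn1_def sgn2_def)
  then show "RR' (RR y) = y" "RR (RR' y) = y" by (simp_all add: RR_def RR'_def)
qed

lemma hh_surj: "\<exists>\<omega>. y = hh \<omega>"
proof -
  define \<omega> where "\<omega> = (\<lambda>j. if int_encode j \<in> dec y then 1 else 0::real)"
  have "phi \<omega> = dec y" by (auto simp: phi_def \<omega>_def)
  then show ?thesis by (auto simp: hh_def intro!: exI[where x=\<omega>])
qed

definition Sig :: "real set set" where "Sig = {A. hh -` A \<in> sets L.lim}"

lemma space_PiM_UNIV[simp]: "space (PiM (UNIV::int set) (\<lambda>_. borel::real measure)) = UNIV" by (simp add: space_PiM)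
lemma space_lim: "space L.lim = UNIV" by simp

lemma Sig_alg: "sigma_algebra UNIV Sig"
  unfolding sigma_algebra_iff2
proof (intro conjI allI ballI impI)
  show "Sig \<subseteq> Pow UNIV" by auto
  show "{} \<in> Sig" by (simp add: Sig_def)
  fix s assume "s \<in> Sig"
  then have "space L.lim - hh -` s \<in> sets L.lim" using sets.compl_sets[of "hh -` s" L.lim] by (simp add: Sig_def)
  then show "UNIV - s \<in> Sig" unfolding Sig_def space_lim by (simp add: vimage_Diff)
next
  fix A :: "nat \<Rightarrow> real set" assume "range A \<subseteq> Sig"
  then have "(\<Union>i. hh -` A i) \<in> sets L.lim" unfolding Sig_def by auto
  then show "(\<Union>i. A i) \<in> Sig" unfolding Sig_def by (simp add: vimage_UN)
qed

definition NN :: "real measure" where "NN = distr L.lim (sigma UNIV Sig) hh"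

lemma sets_sig: "sets (sigma UNIV Sig) = Sig"
  using Sig_alg by (simp add: sigma_algebra.sigma_sets_eq)

lemma sets_NN: "sets NN = Sig" and space_NN: "space NN = UNIV"
  by (simp_all add: NN_def sets_sig)

lemma hh_meas: "hh \<in> L.lim \<rightarrow>\<^sub>M sigma UNIV Sig"
  by (rule measurableI) (simp_all only: sets_sig, auto simp: Sig_def)

lemma measure_NN: assumes "A \<in> Sig" shows "measure NN A = measure L.lim (hh -` A)"
proof -
  have A: "A \<in> sets (sigma UNIV Sig)" using assms by (simp only: sets_sig)
  show ?thesis unfolding NN_def measure_distr[OF hh_meas A] space_lim by simp
qed

lemma sh'_meas: "sh' \<in> L.lim \<rightarrow>\<^sub>M L.lim"
proof -
  have "sh' \<in> PiM UNIV (\<lambda>_. borel) \<rightarrow>\<^sub>M PiM UNIV (\<lambda>_. borel::real measure)"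
    unfolding sh'_def by (rule measurable_PiM_single') (auto simp: space_PiM)
  then show ?thesis by (simp add: measurable_def)
qed

lemma RR_meas: "RR \<in> NN \<rightarrow>\<^sub>M NN"
proof (rule measurableI)
  fix A assume "A \<in> sets NN"
  then have A: "hh -` A \<in> sets L.lim" by (simp add: sets_NN Sig_def)
  have "hh -` (RR -` A) = sh -` (hh -` A)" by (auto simp: RR_hh)
  moreover have "sh -` (hh -` A) \<in> sets L.lim"
    using measurable_sets[OF sh_meas A] by (simp add: space_lim)
  ultimately show "RR -` A \<inter> space NN \<in> sets NN" by (simp add: sets_NN space_NN Sig_def)
qed (simp add: space_NN)

lemma RR'_meas: "RR' \<in> NN \<rightarrow>\<^sub>M NN"
proof (rule measurableI)
  fix A assume "A \<in> sets NN"
  then have A: "hh -` A \<in> sets L.lim" by (simp add: sets_NN Sig_def)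
  have "hh -` (RR' -` A) = sh' -` (hh -` A)" by (auto simp: RR'_hh)
  moreover have "sh' -` (hh -` A) \<in> sets L.lim"
    using measurable_sets[OF sh'_meas A] by (simp add: space_lim)
  ultimately show "RR' -` A \<inter> space NN \<in> sets NN" by (simp add: sets_NN space_NN Sig_def)
qed (simp add: space_NN)

lemma bij_RR: "bij_betw RR UNIV UNIV"
  by (rule bij_betw_byWitness[where f'=RR']) auto

lemma inv_RR: "the_inv_into UNIV RR = RR'"
proof
  fix y show "the_inv_into UNIV RR y = RR' y"
    by (rule the_inv_into_f_eq) (use bij_RR in \<open>auto simp: bij_betw_def\<close>)
qed

lemma mps_NN: "mps NN RR"
  unfolding mps_def
proof (intro conjI ballI)
  show "prob_space NN" unfolding NN_def by (rule prob_space.prob_space_distr[OF L.P.prob_space_axioms hh_meas])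
  show "bij_betw RR (space NN) (space NN)" using bij_RR by (simp add: space_NN)
  show "RR \<in> NN \<rightarrow>\<^sub>M NN" by (rule RR_meas)
  show "the_inv_into (space NN) RR \<in> NN \<rightarrow>\<^sub>M NN" using RR'_meas by (simp add: space_NN inv_RR)
  fix A assume "A \<in> sets NN"
  then have A: "A \<in> Sig" and A': "hh -` A \<in> sets L.lim" by (simp_all add: sets_NN Sig_def)
  have pre: "hh -` (RR -` A) = sh -` (hh -` A) \<inter> space L.lim" by (auto simp: RR_hh space_lim)
  have "RR -` A \<in> Sig" using RR_meas \<open>A \<in> sets NN\<close> by (metis measurable_sets sets_NN space_NN Int_UNIV_right)
  then have "measure NN (RR -` A \<inter> space NN) = measure L.lim (sh -` (hh -` A) \<inter> space L.lim)"
    by (simp add: space_NN measure_NN pre)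
  also have "\<dots> = measure (distr L.lim L.lim sh) (hh -` A)"
    by (rule measure_distr[symmetric, OF sh_meas A'])
  also have "\<dots> = measure NN A" by (simp add: shift_inv measure_NN A)
  finally show "measure NN (RR -` A \<inter> space NN) = measure NN A" .
qed

lemma tpow_hh: "tpow NN RR n (hh \<omega>) = hh (shp n \<omega>)"
proof -
  have pos: "(RR ^^ k) (hh \<omega>) = hh (shp (int k) \<omega>)" for k
    by (induction k) (auto simp: RR_hh shp_def sh_def ac_simps)
  have neg: "(RR' ^^ k) (hh \<omega>) = hh (shp (- int k) \<omega>)" for k
    by (induction k) (auto simp: RR'_hh shp_def sh'_def algebra_simps)
  show ?thesis
  proof (cases "n \<ge> 0")
    case True then show ?thesis using pos[of "nat n"] by (simp add: tpow_def)
  next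
    case False then show ?thesis using neg[of "nat (- n)"] by (simp add: tpow_def space_NN inv_RR)
  qed
qed

lemma tpow_inv: "tpow NN RR (- n) (tpow NN RR n y) = y"
proof -
  obtain \<omega> where "y = hh \<omega>" using hh_surj by blast
  then show ?thesis by (simp add: tpow_hh shp_def)
qed

definition Er :: "real set" where "Er = {y. int_encode 0 \<in> dec y}"

lemma hh_Er: "hh \<omega> \<in> Er \<longleftrightarrow> \<omega> 0 = 1"
  by (simp add: Er_def hh_def phi_def)

lemma image_tpow: "tpow NN RR n ` Er = {y. tpow NN RR (- n) y \<in> Er}"
proof
  show "tpow NN RR n ` Er \<subseteq> {y. tpow NN RR (- n) y \<in> Er}" by (auto simp: tpow_inv)
  show "{y. tpow NN RR (- n) y \<in> Er} \<subseteq> tpow NN RR n ` Er"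
  proof
    fix y assume "y \<in> {y. tpow NN RR (- n) y \<in> Er}"
    moreover have "y = tpow NN RR n (tpow NN RR (- n) y)" using tpow_inv[of "- n" y] by simp
    ultimately show "y \<in> tpow NN RR n ` Er" by blast
  qed
qed

lemma pre_Er: "hh -` Er = rect {0} (\<lambda>_. {1})"
  by (auto simp: hh_Er rect_def)

lemma pre_ret: "hh -` (Er \<inter> tpow NN RR n ` Er) = rect {0, -n} (\<lambda>_. {1})"
  by (auto simp: image_tpow tpow_hh hh_Er rect_def shp_def)

lemma furst_system:
  "\<exists>(N::real measure) R E. mps N R \<and> E \<in> sets N \<and> measure N E > 0 \<and>
     (\<forall>n. measure N (E \<inter> tpow N R n ` E) > 0 \<longrightarrow> (\<exists>a\<in>C. \<exists>b\<in>C. n = a - b))"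
proof (intro exI conjI allI impI)
  show "mps NN RR" by (rule mps_NN)
  have ErS: "Er \<in> Sig" unfolding Sig_def using pre_Er rect_sets[of "{0}" "\<lambda>_. {1}"] by auto
  then show "Er \<in> sets NN" by (simp add: sets_NN)
  show "measure NN Er > 0" using E_pos by (simp add: measure_NN ErS pre_Er)
  fix n assume pos: "measure NN (Er \<inter> tpow NN RR n ` Er) > 0"
  have "Er \<inter> tpow NN RR n ` Er \<in> Sig" unfolding Sig_def using pre_ret rect_sets[of "{0, -n}" "\<lambda>_. {1}"] by auto
  then have "measure L.lim (rect {0, -n} (\<lambda>_. {1})) > 0" using pos unfolding measure_NN[OF \<open>Er \<inter> tpow NN RR n ` Er \<in> Sig\<close>] pre_ret by simp
  then show "\<exists>a\<in>C. \<exists>b\<in>C. n = a - b" by (rule ret_diff)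
qed

end

lemma furst_from_freq:
  fixes C :: "int set" and \<delta> :: real
  assumes "\<delta> > 0" and fr: "\<And>K. \<exists>a N. N \<ge> K \<and> real (card (C \<inter> {a..a + int N - 1})) \<ge> \<delta> * real N"
  shows "\<exists>(N::real measure) R E. mps N R \<and> E \<in> sets N \<and> measure N E > 0 \<and>
     (\<forall>n. measure N (E \<inter> tpow N R n ` E) > 0 \<longrightarrow> (\<exists>a\<in>C. \<exists>b\<in>C. n = a - b))"
proof -
  have "\<forall>i. \<exists>p. snd p \<ge> Suc i \<and> real (card (C \<inter> {fst p..fst p + int (snd p) - 1})) \<ge> \<delta> * real (snd p)"
    using fr by auto
  then obtain pf where pf: "\<And>i. snd (pf i) \<ge> Suc i \<and> real (card (C \<inter> {fst (pf i)..fst (pf i) + int (snd (pf i)) - 1})) \<ge> \<delta> * real (snd (pf i))"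
    by metis
  interpret F: furst C \<delta> "\<lambda>i. fst (pf i)" "\<lambda>i. snd (pf i)"
    by unfold_locales (use pf assms(1) in auto)
  show ?thesis by (rule F.furst_system)
qed



lemma density_freq:
  fixes B :: "int set"
  assumes "upper_banach_density B > 0"
  shows "\<exists>\<delta>>0. \<forall>K. \<exists>a N. N \<ge> K \<and> N > 0 \<and> real (card (B \<inter> {a..a + int N - 1})) \<ge> \<delta> * real N"
proof (rule ccontr)
  assume no: "\<not> ?thesis"
  define X where "X = (\<lambda>N::nat. SUP M::int. real (card (B \<inter> {M..M + int N - 1})) / real N)"
  have le1: "real (card (B \<inter> {M..M + int N - 1})) / real N \<le> 1" for M N
  proof (cases "N = 0")
    case False
    have "card (B \<inter> {M..M + int N - 1}) \<le> card {M..M + int N - 1}" by (intro card_mono) auto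
    then show ?thesis using False by simp
  qed simp
  have bdd: "bdd_above (range (\<lambda>M. real (card (B \<inter> {M..M + int N - 1})) / real N))" for N
    by (rule bdd_aboveI[where M=1]) (auto intro: le1)
  have X0: "X N \<ge> 0" for N
    unfolding X_def by (rule cSUP_upper2[OF bdd, of 0]) auto
  have "X \<longlonglongrightarrow> 0"
  proof (rule LIMSEQ_I)
    fix r :: real assume "r > 0"
    then have "r / 2 > 0" by simp
    with no obtain K where K: "\<And>a N. N \<ge> K \<Longrightarrow> N > 0 \<Longrightarrow> real (card (B \<inter> {a..a + int N - 1})) < r / 2 * real N"
      by (meson not_le)
    show "\<exists>no. \<forall>n\<ge>no. norm (X n - 0) < r"
    proof (intro exI allI impI)
      fix n assume n: "max K 1 \<le> n"
      have "X n \<le> r / 2" unfolding X_def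
      proof (rule cSUP_least)
        fix M :: int
        have "real (card (B \<inter> {M..M + int n - 1})) < r / 2 * real n" using K[of n M] n by auto
        then show "real (card (B \<inter> {M..M + int n - 1})) / real n \<le> r / 2" using n by (simp add: divide_simps)
      qed simp
      then show "norm (X n - 0) < r" using X0[of n] \<open>r > 0\<close> by simp
    qed
  qed
  then have "upper_banach_density B = 0" unfolding upper_banach_density_def X_def[symmetric] by (rule limI)
  then show False using assms by simp
qed

lemma residue_freq:
  fixes B :: "int set" and L :: int
  assumes "L > 0" and "\<delta> > 0" and fr: "\<And>K. \<exists>a N. N \<ge> K \<and> N > 0 \<and> real (card (B \<inter> {a..a + int N - 1})) \<ge> \<delta> * real N"
  shows "\<exists>r. \<forall>K. \<exists>a N. N \<ge> K \<and> real (card ({b\<in>B. b mod L = r} \<inter> {a..a + int N - 1})) \<ge> \<delta> / real_of_int L * real N"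
proof (rule ccontr)
  define good where "good r K \<longleftrightarrow> (\<exists>a N. N \<ge> K \<and> real (card ({b\<in>B. b mod L = r} \<inter> {a..a + int N - 1})) \<ge> \<delta> / real_of_int L * real N)" for r K
  assume "\<not> ?thesis"
  then have "\<forall>r. \<exists>K. \<not> good r K" unfolding good_def by blast
  then obtain Kf where Kf: "\<And>r. \<not> good r (Kf r)" by metis
  define K0 where "K0 = (\<Sum>r\<in>{0..<L}. Kf r)"
  have mono: "good r K \<Longrightarrow> K' \<le> K \<Longrightarrow> good r K'" for r K K' unfolding good_def by (meson order_trans)
  have Kle: "r \<in> {0..<L} \<Longrightarrow> Kf r \<le> K0" for r unfolding K0_def by (intro member_le_sum) auto
  obtain a N where N: "N \<ge> K0" "N > 0" and c: "real (card (B \<inter> {a..a + int N - 1})) \<ge> \<delta> * real N" using fr by blast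
  let ?I = "{a..a + int N - 1}"
  have eqU: "B \<inter> ?I = (\<Union>r\<in>{0..<L}. {b\<in>B. b mod L = r} \<inter> ?I)" using assms(1) by auto
  have c1: "card (B \<inter> ?I) \<le> (\<Sum>r\<in>{0..<L}. card ({b\<in>B. b mod L = r} \<inter> ?I))"
    unfolding eqU by (rule card_UN_le) simp
  have "real (card ({b\<in>B. b mod L = r} \<inter> ?I)) < \<delta> / real_of_int L * real N" if "r \<in> {0..<L}" for r
  proof (rule ccontr)
    assume "\<not> ?thesis"
    then have "real (card ({b\<in>B. b mod L = r} \<inter> ?I)) \<ge> \<delta> / real_of_int L * real N" by simp
    then have "good r (Kf r)" unfolding good_def using N Kle[OF that] by (intro exI[of _ a] exI[of _ N]) auto
    with Kf show False by blast
  qed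
  then have c2: "(\<Sum>r\<in>{0..<L}. real (card ({b\<in>B. b mod L = r} \<inter> ?I))) < (\<Sum>r\<in>{0..<L}. \<delta> / real_of_int L * real N)"
    using assms(1) by (intro sum_strict_mono) auto
  have "real (card (B \<inter> ?I)) \<le> real (\<Sum>r\<in>{0..<L}. card ({b\<in>B. b mod L = r} \<inter> ?I))"
    using c1 by (simp only: of_nat_le_iff)
  also have "\<dots> = (\<Sum>r\<in>{0..<L}. real (card ({b\<in>B. b mod L = r} \<inter> ?I)))" by (rule of_nat_sum)
  also have "\<dots> < (\<Sum>r\<in>{0..<L}. \<delta> / real_of_int L * real N)" by (rule c2)
  also have "\<dots> = real (nat L) * (\<delta> / real_of_int L * real N)" by simp
  also have "\<dots> = \<delta> * real N" using assms(1) by simp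
  finally show False using c by simp
qed



locale msys =
  fixes M :: "'a measure" and T :: "'a \<Rightarrow> 'a"
  assumes mps: "mps M T"
begin

abbreviation "Ti \<equiv> the_inv_into (space M) T"
abbreviation "G \<equiv> tpow M T"

lemma prob: "prob_space M" using mps by (simp add: mps_def)
lemma bij: "bij_betw T (space M) (space M)" using mps by (simp add: mps_def)
lemma Tm: "T \<in> M \<rightarrow>\<^sub>M M" using mps by (simp add: mps_def)
lemma Tim: "Ti \<in> M \<rightarrow>\<^sub>M M" using mps by (simp add: mps_def)
lemma Tpres: "A \<in> sets M \<Longrightarrow> measure M (T -` A \<inter> space M) = measure M A" using mps by (simp add: mps_def)

interpretation P: prob_space M by (rule prob)

lemma inj: "inj_on T (space M)" using bij by (simp add: bij_betw_def)

lemma T_sp: "x \<in> space M \<Longrightarrow> T x \<in> space M" using bij by (auto simp: bij_betw_def)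
lemma Ti_sp: "x \<in> space M \<Longrightarrow> Ti x \<in> space M"
  using bij_betw_the_inv_into[OF bij] by (auto simp: bij_betw_def)
lemma T_Ti: "x \<in> space M \<Longrightarrow> T (Ti x) = x" using f_the_inv_into_f_bij_betw[OF bij] by auto
lemma Ti_T: "x \<in> space M \<Longrightarrow> Ti (T x) = x" using the_inv_into_f_f[OF inj] by auto

lemma G0: "G 0 x = x" by (simp add: tpow_def)

lemma G_sp: "x \<in> space M \<Longrightarrow> G n x \<in> space M"
proof -
  assume x: "x \<in> space M"
  have a: "(T ^^ k) x \<in> space M" for k by (induction k) (auto simp: x T_sp)
  have b: "(Ti ^^ k) x \<in> space M" for k by (induction k) (auto simp: x Ti_sp)
  show ?thesis using a b by (simp add: tpow_def)
qed

lemma G_suc: "x \<in> space M \<Longrightarrow> G (n + 1) x = T (G n x)"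
proof (cases "n \<ge> 0")
  case True
  then have "nat (n + 1) = Suc (nat n)" by simp
  then show ?thesis using True by (simp add: tpow_def)
next
  case False
  assume x: "x \<in> space M"
  have sp: "(Ti ^^ k) x \<in> space M" for k by (induction k) (auto simp: x Ti_sp)
  show ?thesis
  proof (cases "n = -1")
    case True then show ?thesis using x by (simp add: tpow_def T_Ti)
  next
    case False
    with \<open>\<not> n \<ge> 0\<close> have "nat (- n) = Suc (nat (- (n + 1)))" "\<not> n + 1 \<ge> 0" by auto
    then show ?thesis by (simp add: tpow_def T_Ti sp)
  qed
qed

lemma G_pred: "x \<in> space M \<Longrightarrow> G (n - 1) x = Ti (G n x)"
  using G_suc[of x "n - 1"] by (simp add: Ti_T G_sp)

lemma G_add: "x \<in> space M \<Longrightarrow> G (m + n) x = G m (G n x)"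
proof (induction m rule: int_induct[where k=0])
  case base then show ?case by (simp add: G0)
next
  case (step1 i)
  have "G (i + 1 + n) x = G (i + n + 1) x" by (simp add: ac_simps)
  also have "\<dots> = T (G (i + n) x)" using step1 by (simp add: G_suc)
  also have "\<dots> = G (i + 1) (G n x)" using step1 by (simp add: G_suc G_sp)
  finally show ?case .
next
  case (step2 i)
  have "G (i - 1 + n) x = G (i + n - 1) x" by (simp add: algebra_simps)
  also have "\<dots> = Ti (G (i + n) x)" using step2 by (simp add: G_pred)
  also have "\<dots> = G (i - 1) (G n x)" using step2 by (simp add: G_pred G_sp)
  finally show ?case .
qed

lemma G_inj: "inj_on (G n) (space M)"
proof (rule inj_on_inverseI)
  fix x assume "x \<in> space M"
  then show "G (- n) (G n x) = x" using G_add[of x "- n" n] by (simp add: G0)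
qed

lemma G_image_sub: "A \<subseteq> space M \<Longrightarrow> G n ` A \<subseteq> space M" using G_sp by auto

lemma G_image_add: "A \<subseteq> space M \<Longrightarrow> G m ` (G n ` A) = G (m + n) ` A"
  using G_add by (auto simp: image_image subset_iff intro!: image_cong)

lemma T_image: assumes A: "A \<in> sets M" shows "T ` A \<in> sets M" "measure M (T ` A) = measure M A"
proof -
  have As: "A \<subseteq> space M" using sets.sets_into_space A by auto
  have e: "T ` A = Ti -` A \<inter> space M"
  proof
    show "T ` A \<subseteq> Ti -` A \<inter> space M" using As by (auto simp: Ti_T T_sp)
    show "Ti -` A \<inter> space M \<subseteq> T ` A"
    proof
      fix y assume "y \<in> Ti -` A \<inter> space M"
      then show "y \<in> T ` A" using T_Ti[of y] by (metis IntD1 IntD2 image_eqI vimageD)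
    qed
  qed
  show TA: "T ` A \<in> sets M" unfolding e using measurable_sets[OF Tim A] .
  have "T -` (T ` A) \<inter> space M = A" using As inj by (auto simp: inj_on_def T_sp)
  then show "measure M (T ` A) = measure M A" using Tpres[OF TA] by simp
qed

lemma Ti_image: assumes A: "A \<in> sets M" shows "Ti ` A \<in> sets M" "measure M (Ti ` A) = measure M A"
proof -
  have As: "A \<subseteq> space M" using sets.sets_into_space A by auto
  have e: "Ti ` A = T -` A \<inter> space M"
  proof
    show "Ti ` A \<subseteq> T -` A \<inter> space M" using As by (auto simp: T_Ti Ti_sp)
    show "T -` A \<inter> space M \<subseteq> Ti ` A"
    proof
      fix y assume "y \<in> T -` A \<inter> space M"
      then show "y \<in> Ti ` A" using Ti_T[of y] by (metis IntD1 IntD2 image_eqI vimageD)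
    qed
  qed
  show "Ti ` A \<in> sets M" unfolding e using measurable_sets[OF Tm A] .
  show "measure M (Ti ` A) = measure M A" unfolding e by (rule Tpres[OF A])
qed

lemma G_image: assumes A: "A \<in> sets M" shows "G n ` A \<in> sets M \<and> measure M (G n ` A) = measure M A"
proof (induction n rule: int_induct[where k=0])
  case base
  then show ?case using A by (simp add: G0)
next
  case (step1 i)
  have As: "A \<subseteq> space M" using sets.sets_into_space A by auto
  have "G (i + 1) ` A = T ` (G i ` A)" using As by (force simp: G_suc image_image intro!: image_cong)
  then show ?case using step1 T_image[of "G i ` A"] by simp
next
  case (step2 i)
  have As: "A \<subseteq> space M" using sets.sets_into_space A by auto
  have "G (i - 1) ` A = Ti ` (G i ` A)" using As by (force simp: G_pred image_image intro!: image_cong)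
  then show ?case using step2 Ti_image[of "G i ` A"] by simp
qed

lemma G1: "x \<in> space M \<Longrightarrow> G 1 x = T x" using G_suc[of x 0] by (simp add: G0)

lemma excl:
  assumes D: "D \<in> sets M" and disj: "D \<inter> T ` D = {}"
    and e1: "measure M (sym_diff D (G s ` D)) \<le> \<epsilon>" and e2: "measure M (sym_diff D (G s' ` D)) \<le> \<epsilon>"
  shows "measure M (D \<inter> G (s - s' + 1) ` D) \<le> 2 * \<epsilon>"
proof -
  have Ds: "D \<subseteq> space M" using sets.sets_into_space D by auto
  define X where "X = G s' ` D"
  define Y where "Y = G (s + 1) ` D"
  define Z where "Z = G s ` D"
  have Xs: "X \<in> sets M" and Zs: "Z \<in> sets M" and Ys: "Y \<in> sets M"
    using G_image[OF D] by (auto simp: X_def Y_def Z_def)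
  have Zsp: "Z \<subseteq> space M" using Ds G_image_sub by (simp add: Z_def)
  have kD: "G (s - s' + 1) ` D \<subseteq> space M" using Ds G_image_sub by simp
  have "G s' ` (D \<inter> G (s - s' + 1) ` D) = X \<inter> G s' ` (G (s - s' + 1) ` D)"
    unfolding X_def by (rule inj_on_image_Int[OF G_inj Ds kD])
  also have "G s' ` (G (s - s' + 1) ` D) = Y" unfolding Y_def using G_image_add[OF Ds] by simp
  finally have im: "G s' ` (D \<inter> G (s - s' + 1) ` D) = X \<inter> Y" .
  have DI: "D \<inter> G (s - s' + 1) ` D \<in> sets M" using D G_image[OF D] by auto
  have "measure M (D \<inter> G (s - s' + 1) ` D) = measure M (X \<inter> Y)"
    using G_image[OF DI, of s'] im by simp
  have YT: "Y = T ` Z" unfolding Y_def Z_def using Ds by (force simp: G_suc image_image intro!: image_cong)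
  have "Y - T ` D = T ` (Z - D)" unfolding YT by (rule inj_on_image_set_diff[OF inj, symmetric]) (use Zsp Ds in auto)
  then have mY: "measure M (Y - T ` D) = measure M (Z - D)" using T_image[of "Z - D"] Zs D by auto
  have "measure M (Z - D) \<le> measure M (sym_diff D Z)"
    by (rule P.finite_measure_mono) (use D Zs in auto)
  then have mY': "measure M (Y - T ` D) \<le> \<epsilon>" using mY e1 by (simp add: Z_def)
  have "measure M (X - D) \<le> measure M (sym_diff D X)"
    by (rule P.finite_measure_mono) (use D Xs in auto)
  then have mX: "measure M (X - D) \<le> \<epsilon>" using e2 by (simp add: X_def)
  have sub: "X \<inter> Y \<subseteq> (X - D) \<union> (Y - T ` D)" using disj by auto
  have TD: "T ` D \<in> sets M" using T_image[OF D] by simp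
  have "measure M (X \<inter> Y) \<le> measure M ((X - D) \<union> (Y - T ` D))"
    by (rule P.finite_measure_mono[OF sub]) (use Xs Ys D TD in auto)
  also have "\<dots> \<le> measure M (X - D) + measure M (Y - T ` D)"
    by (rule measure_Un_le) (use Xs Ys D TD in auto)
  finally have "measure M (X \<inter> Y) \<le> 2 * \<epsilon>" using mX mY' by simp
  then show ?thesis using \<open>measure M (D \<inter> G (s - s' + 1) ` D) = measure M (X \<inter> Y)\<close> by simp
qed

end


lemma ubd_empty: "upper_banach_density {} = 0"
  unfolding upper_banach_density_def by simp

theorem proposition4p2:
  fixes M :: "'a measure" and T :: "'a \<Rightarrow> 'a"
  assumes "rigid_recurrence M T" and "nontrivial_system M"
  shows "\<forall>D\<in>sets M. D \<inter> T ` D = {} \<longrightarrow> (\<forall>c>0.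
           \<not> (\<exists>n0::int. \<exists>B::int set. upper_banach_density B > 0 \<and>
                 {n0 + a - b | a b. a \<in> B \<and> b \<in> B} \<subseteq> return_set M T D c))"
proof (intro ballI impI allI notI)
  obtain S where mps: "mps M T" and rig: "set_of_rigidity M T S" and rec: "\<And>n. set_of_recurrence ((\<lambda>s. s + n) ` S)"
    using assms(1) unfolding rigid_recurrence_def by blast
  interpret msys M T by (rule msys.intro[OF mps])
  fix D c assume D: "D \<in> sets M" and disj: "D \<inter> T ` D = {}" and c: "(c::real) > 0"
  assume "\<exists>n0::int. \<exists>B::int set. upper_banach_density B > 0 \<and>
                 {n0 + a - b | a b. a \<in> B \<and> b \<in> B} \<subseteq> return_set M T D c"
  then obtain n0 and B :: "int set" where dB: "upper_banach_density B > 0"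
    and sub: "{n0 + a - b | a b. a \<in> B \<and> b \<in> B} \<subseteq> return_set M T D c" by blast
  have ret: "measure M (D \<inter> G (n0 + a - b) ` D) > c" if "a \<in> B" "b \<in> B" for a b
    using sub that unfolding return_set_def by blast
  define \<epsilon> where "\<epsilon> = c / 3"
  have \<epsilon>: "\<epsilon> > 0" using c by (simp add: \<epsilon>_def)
  define F where "F = {n\<in>S. measure M (sym_diff D (G n ` D)) > \<epsilon>}"
  define S\<epsilon> where "S\<epsilon> = {n\<in>S. measure M (sym_diff D (G n ` D)) \<le> \<epsilon>}"
  have Ffin: "finite F" using rig D \<epsilon> unfolding set_of_rigidity_def F_def by blast
  have Sinf: "infinite S" using rig unfolding set_of_rigidity_def by blast
  have SF: "S = S\<epsilon> \<union> F" by (auto simp: F_def S\<epsilon>_def)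
  have Seinf: "infinite S\<epsilon>" using Sinf Ffin SF by auto
  have ex: "measure M (D \<inter> G (s - s' + 1) ` D) < c" if "s \<in> S\<epsilon>" "s' \<in> S\<epsilon>" for s s'
  proof -
    have "measure M (D \<inter> G (s - s' + 1) ` D) \<le> 2 * \<epsilon>"
      by (rule excl[OF D disj]) (use that in \<open>auto simp: S\<epsilon>_def\<close>)
    then show ?thesis using c by (simp add: \<epsilon>_def)
  qed
  have Bne: "B \<noteq> {}" using dB ubd_empty by auto
  then obtain b0 where b0: "b0 \<in> B" by blast
  have caseA: "s - s' + 1 \<noteq> n0" if "s \<in> S\<epsilon>" "s' \<in> S\<epsilon>" for s s'
    using ex[OF that] ret[OF b0 b0] by auto
  have "\<exists>s'\<in>S\<epsilon>. s' + n0 - 1 \<notin> S"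
  proof (rule ccontr)
    assume "\<not> ?thesis"
    then have allin: "(\<lambda>s'. s' + n0 - 1) ` S\<epsilon> \<subseteq> S" by auto
    have "infinite ((\<lambda>s'. s' + n0 - 1) ` S\<epsilon>)"
      using Seinf by (subst finite_image_iff) (auto simp: inj_on_def)
    then have "\<not> (\<lambda>s'. s' + n0 - 1) ` S\<epsilon> \<subseteq> F" using Ffin finite_subset by blast
    then obtain s' where s': "s' \<in> S\<epsilon>" "s' + n0 - 1 \<notin> F" by blast
    then have "s' + n0 - 1 \<in> S\<epsilon>" using allin SF by auto
    from caseA[OF this s'(1)] show False by simp
  qed
  then obtain s' where s': "s' \<in> S\<epsilon>" and t: "s' + n0 - 1 \<notin> S" by blast
  define k where "k = - (s' + n0 - 1)"
  define L where "L = 1 + (\<Sum>s\<in>F. \<bar>s + k\<bar>)"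
  have "0 \<le> (\<Sum>s\<in>F. \<bar>s + k\<bar>)" by (rule sum_nonneg) simp
  then have Lpos: "L > 0" unfolding L_def by linarith
  have Lbig: "\<bar>s + k\<bar> < L" if "s \<in> F" for s
  proof -
    have "\<bar>s + k\<bar> \<le> (\<Sum>s\<in>F. \<bar>s + k\<bar>)" by (rule member_le_sum) (use that Ffin in auto)
    then show ?thesis unfolding L_def by simp
  qed
  obtain \<delta> where \<delta>: "\<delta> > 0" and fr: "\<And>K. \<exists>a N. N \<ge> K \<and> N > 0 \<and> real (card (B \<inter> {a..a + int N - 1})) \<ge> \<delta> * real N"
    using density_freq[OF dB] by blast
  obtain r where frr: "\<And>K. \<exists>a N. N \<ge> K \<and> real (card ({b\<in>B. b mod L = r} \<inter> {a..a + int N - 1})) \<ge> \<delta> / real_of_int L * real N"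
    using residue_freq[OF Lpos \<delta> fr] by blast
  have \<delta>L: "\<delta> / real_of_int L > 0" using \<delta> Lpos by simp
  obtain N :: "real measure" and R E where N: "mps N R" "E \<in> sets N" "measure N E > 0"
    and retC: "\<And>n. measure N (E \<inter> tpow N R n ` E) > 0 \<Longrightarrow> (\<exists>a\<in>{b\<in>B. b mod L = r}. \<exists>b\<in>{b\<in>B. b mod L = r}. n = a - b)"
    using furst_from_freq[OF \<delta>L frr] by blast
  obtain n where n: "n \<in> (\<lambda>s. s + k) ` S" and np: "measure N (E \<inter> tpow N R n ` E) > 0"
    using rec[of k] N unfolding set_of_recurrence_def by blast
  obtain s where s: "s \<in> S" and ns: "n = s + k" using n by blast
  obtain a b where a: "a \<in> B" "a mod L = r" and b: "b \<in> B" "b mod L = r" and nab: "n = a - b"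
    using retC[OF np] by blast
  show False
  proof (cases "s \<in> F")
    case True
    have "L dvd n" unfolding nab using a(2) b(2) mod_eq_dvd_iff[of a L b] by simp
    moreover have "\<bar>n\<bar> < L" using Lbig[OF True] ns by simp
    ultimately have "n = 0"
    proof (rule_tac ccontr)
      assume "L dvd n" "\<bar>n\<bar> < L" "n \<noteq> 0"
      then have "\<bar>L\<bar> \<le> \<bar>n\<bar>" using dvd_imp_le_int by blast
      then show False using \<open>\<bar>n\<bar> < L\<close> by simp
    qed
    then have "s = s' + n0 - 1" using ns by (simp add: k_def)
    then show False using s t by simp
  next
    case False
    then have sS: "s \<in> S\<epsilon>" using s SF by auto
    have "n0 + a - b = s - s' + 1" using nab ns by (simp add: k_def)
    then show False using ret[OF a(1) b(1)] ex[OF sS s'] by simp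
  qed
qed


end
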